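(* Let $\mathcal X\subset\mathbb{R}$ be a nonempty compact convex set of control angles and $\epsilon_r>0$. Let $\theta\in\mathbb{R}^n$ contain, as linear coordinates, two matrices $R^a,R^b\in\mathbb{R}^{3\times3}$, and let $R_x(u)=\begin{pmatrix}1&0&0\\0&\cos u&-\sin u\\0&\sin u&\cos u\end{pmatrix}$. Define $$b(\theta,u)=-\frac{\mathrm{tr}\big((R^a)^TR^bR_x(u)^T\big)}{\sqrt{\|R^a\|_F^2+\epsilon_r}\sqrt{\|R^b\|_F^2+\epsilon_r}}.$$ Then for every $u\in\mathcal X$, $b(\cdot,u)$ is twice differentiable in $\theta$ with locally Lipschitz second derivatives and is $L$-curvature bounded for a constant $L$ independent of $u$, and $\|\partial^2b/\partial\theta\partial u\|$ is uniformly bounded over $\theta\in\mathbb{R}^n$, $u\in\mathcal X$.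
   Context: $\|\cdot\|_F$ is the Frobenius norm. A function $\phi$ is $L$-curvature bounded if $\phi(x)+\frac L2\|x\|^2$ is convex and $\nabla\phi$ is $L$-Lipschitz. *)

theory Defs
  imports "HOL-Analysis.Analysis"
begin

definition Rx :: "real \<Rightarrow> real^3^3" where
  "Rx u = vector [vector [1, 0, 0],
                  vector [0, cos u, - sin u],
                  vector [0, sin u, cos u]]"

definition frob_norm :: "real^3^3 \<Rightarrow> real" where
  "frob_norm A = sqrt (\<Sum>i\<in>UNIV. \<Sum>j\<in>UNIV. (A $ i $ j)^2)"

text \<open>The barrier-type function b(theta,u); Ra = Pa theta, Rb = Pb theta.\<close>
definition bfun :: "(real^'n \<Rightarrow> real^3^3) \<Rightarrow> (real^'n \<Rightarrow> real^3^3) \<Rightarrow> real \<Rightarrow>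
                    real^'n \<Rightarrow> real \<Rightarrow> real" where
  "bfun Pa Pb eps \<theta> u =
     - trace (transpose (Pa \<theta>) ** Pb \<theta> ** transpose (Rx u))
     / (sqrt ((frob_norm (Pa \<theta>))^2 + eps) * sqrt ((frob_norm (Pb \<theta>))^2 + eps))"

definition curvature_bounded :: "real \<Rightarrow> ('a::euclidean_space \<Rightarrow> real) \<Rightarrow> bool" where
  "curvature_bounded L \<phi> \<longleftrightarrow>
     convex_on UNIV (\<lambda>x. \<phi> x + L / 2 * (norm x)^2) \<and>
     (\<exists>g. (\<forall>x. GDERIV \<phi> x :> g x) \<and> L-lipschitz_on UNIV g)"

definition twice_diff_loc_lip_hessian :: "('a::euclidean_space \<Rightarrow> real) \<Rightarrow> bool" where
  "twice_diff_loc_lip_hessian \<phi> \<longleftrightarrow>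
     (\<exists>g H. (\<forall>x. GDERIV \<phi> x :> g x) \<and>
            (\<forall>x. (g has_derivative blinfun_apply (H x)) (at x)) \<and>
            (\<forall>x. \<exists>e>0. \<exists>K. K-lipschitz_on (ball x e) H))"

end

theory Submission
  imports Defs
begin


definition BL :: "('a::metric_space \<Rightarrow> 'b::real_normed_vector) \<Rightarrow> bool" where
  "BL f \<longleftrightarrow> (\<exists>B. \<forall>x. norm (f x) \<le> B) \<and> (\<exists>L. L-lipschitz_on UNIV f)"

lemma BL_const: "BL (\<lambda>x. c)"
  unfolding BL_def by (auto intro: lipschitz_on_constant)

lemma BL_add: "BL f \<Longrightarrow> BL g \<Longrightarrow> BL (\<lambda>x. f x + g x)"
  unfolding BL_def
  apply (elim conjE exE)
  subgoal for B L B' L'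
    apply (rule conjI)
     apply (rule exI[of _ "B+B'"])
     apply (auto intro: order.trans[OF norm_triangle_ineq] add_mono)[1]
    apply (rule exI[of _ "L+L'"])
    by (auto intro: lipschitz_on_add)
  done

lemma BL_minus: "BL f \<Longrightarrow> BL (\<lambda>x. - f x)"
  unfolding BL_def by (auto intro!: lipschitz_on_minus)

lemma BL_diff: fixes f g :: "'a::metric_space \<Rightarrow> 'b::real_normed_vector"
  shows "BL f \<Longrightarrow> BL g \<Longrightarrow> BL (\<lambda>x. f x - g x)"
  using BL_add[of f "\<lambda>x. - g x"] BL_minus[of g] by simp

lemma BL_bilinear:
  assumes bb: "bounded_bilinear pr" and f: "BL f" and g: "BL g"
  shows "BL (\<lambda>x. pr (f x) (g x))"
proof -
  interpret bounded_bilinear pr by fact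
  obtain K where K: "K > 0" "\<And>a b. norm (pr a b) \<le> norm a * norm b * K"
    using pos_bounded by blast
  obtain Bf Lf where Bf: "\<And>x. norm (f x) \<le> Bf" and Lf: "Lf-lipschitz_on UNIV f"
    using f unfolding BL_def by blast
  obtain Bg Lg where Bg: "\<And>x. norm (g x) \<le> Bg" and Lg: "Lg-lipschitz_on UNIV g"
    using g unfolding BL_def by blast
  have Bf0: "Bf \<ge> 0" using Bf[of undefined] norm_ge_zero[of "f undefined"] by linarith
  have Bg0: "Bg \<ge> 0" using Bg[of undefined] norm_ge_zero[of "g undefined"] by linarith
  have Lf0: "Lf \<ge> 0" using Lf lipschitz_on_nonneg by blast
  have Lg0: "Lg \<ge> 0" using Lg lipschitz_on_nonneg by blast
  have bnd: "norm (pr (f x) (g x)) \<le> Bf * Bg * K" for x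
  proof -
    have "norm (pr (f x) (g x)) \<le> norm (f x) * norm (g x) * K" by (rule K)
    also have "\<dots> \<le> Bf * Bg * K"
      using Bf Bg K(1) Bf0 Bg0 by (intro mult_right_mono mult_mono) auto
    finally show ?thesis .
  qed
  have lip: "(K * (Lf * Bg + Bf * Lg))-lipschitz_on UNIV (\<lambda>x. pr (f x) (g x))"
  proof (rule lipschitz_onI)
    fix x y
    have e: "pr (f x) (g x) - pr (f y) (g y) = pr (f x - f y) (g x) + pr (f y) (g x - g y)"
      by (simp add: diff_left diff_right)
    have d1: "norm (f x - f y) \<le> Lf * dist x y" using lipschitz_onD[OF Lf]
      by (simp add: dist_norm)
    have d2: "norm (g x - g y) \<le> Lg * dist x y" using lipschitz_onD[OF Lg]
      by (simp add: dist_norm)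
    have "norm (pr (f x - f y) (g x)) \<le> norm (f x - f y) * norm (g x) * K" by (rule K)
    also have "\<dots> \<le> (Lf * dist x y) * Bg * K"
      using d1 Bg K(1) Lf0 Bg0 by (intro mult_right_mono mult_mono) auto
    finally have t1: "norm (pr (f x - f y) (g x)) \<le> (Lf * dist x y) * Bg * K" .
    have "norm (pr (f y) (g x - g y)) \<le> norm (f y) * norm (g x - g y) * K" by (rule K)
    also have "\<dots> \<le> Bf * (Lg * dist x y) * K"
      using d2 Bf K(1) Bf0 Lg0 by (intro mult_right_mono mult_mono) auto
    finally have t2: "norm (pr (f y) (g x - g y)) \<le> Bf * (Lg * dist x y) * K" .
    have "dist (pr (f x) (g x)) (pr (f y) (g y)) \<le> norm (pr (f x - f y) (g x)) + norm (pr (f y) (g x - g y))"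
      by (simp add: dist_norm e norm_triangle_ineq)
    also have "\<dots> \<le> (Lf * dist x y) * Bg * K + Bf * (Lg * dist x y) * K" using t1 t2 by simp
    also have "\<dots> = K * (Lf * Bg + Bf * Lg) * dist x y" by (simp add: algebra_simps)
    finally show "dist (pr (f x) (g x)) (pr (f y) (g y)) \<le> K * (Lf * Bg + Bf * Lg) * dist x y" .
  next
    show "0 \<le> K * (Lf * Bg + Bf * Lg)" using K Lf0 Lg0 Bf0 Bg0 by simp
  qed
  show ?thesis unfolding BL_def using bnd lip by blast
qed

lemma BL_linear:
  assumes T: "bounded_linear T" and f: "BL f" shows "BL (\<lambda>x. T (f x))"
proof -
  interpret bounded_linear T by fact
  obtain K where K: "K \<ge> 0" "\<And>x. norm (T x) \<le> norm x * K" using nonneg_bounded by blast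
  obtain Bf Lf where Bf: "\<And>x. norm (f x) \<le> Bf" and Lf: "Lf-lipschitz_on UNIV f"
    using f unfolding BL_def by blast
  obtain C where C: "C-lipschitz_on (f ` UNIV) T" using lipschitz_boundE by blast
  have "norm (T (f x)) \<le> Bf * K" for x
    using K(2)[of "f x"] Bf[of x] K(1) by (meson mult_right_mono order_trans)
  moreover have "(C * Lf)-lipschitz_on UNIV (\<lambda>x. T (f x))"
    by (rule lipschitz_on_compose2[OF Lf C])
  ultimately show ?thesis unfolding BL_def by blast
qed

lemma BL_comp_linear:
  assumes P: "bounded_linear P" and f: "BL f" shows "BL (\<lambda>x. f (P x))"
proof -
  interpret bounded_linear P by fact
  obtain Bf Lf where Bf: "\<And>x. norm (f x) \<le> Bf" and Lf: "Lf-lipschitz_on UNIV f"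
    using f unfolding BL_def by blast
  obtain C where C: "C-lipschitz_on UNIV P" using lipschitz_boundE by blast
  have "(Lf * C)-lipschitz_on UNIV (\<lambda>x. f (P x))"
    by (rule lipschitz_on_compose2[OF C lipschitz_on_subset[OF Lf]]) auto
  then show ?thesis using Bf unfolding BL_def by blast
qed

definition SM :: "('a::real_normed_vector \<Rightarrow> 'b::real_normed_vector) \<Rightarrow> bool" where
  "SM f \<longleftrightarrow> BL f \<and> (\<exists>f'. (\<forall>x. (f has_derivative blinfun_apply (f' x)) (at x)) \<and> BL f')"

lemma SM_const: "SM (\<lambda>x. c)"
  unfolding SM_def
  by (auto intro!: BL_const exI[of _ "\<lambda>x. 0"] derivative_eq_intros)

lemma SM_add: assumes "SM f" "SM g" shows "SM (\<lambda>x. f x + g x)"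
proof -
  obtain f' g' where f: "BL f" "\<And>x. (f has_derivative blinfun_apply (f' x)) (at x)" "BL f'"
    and g: "BL g" "\<And>x. (g has_derivative blinfun_apply (g' x)) (at x)" "BL g'"
    using assms unfolding SM_def by blast
  show ?thesis unfolding SM_def
    by (auto intro!: BL_add f g exI[of _ "\<lambda>x. f' x + g' x"] derivative_eq_intros
        simp: blinfun.add_left)
qed

lemma SM_minus: assumes "SM f" shows "SM (\<lambda>x. - f x)"
proof -
  obtain f' where f: "BL f" "\<And>x. (f has_derivative blinfun_apply (f' x)) (at x)" "BL f'"
    using assms unfolding SM_def by blast
  show ?thesis unfolding SM_def
    by (auto intro!: BL_minus f exI[of _ "\<lambda>x. - f' x"] derivative_eq_intros
        simp: blinfun.minus_left)
qed

lemma SM_diff: fixes f g :: "'a::real_normed_vector \<Rightarrow> 'b::real_normed_vector"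
  shows "SM f \<Longrightarrow> SM g \<Longrightarrow> SM (\<lambda>x. f x - g x)"
  using SM_add[of f "\<lambda>x. - g x"] SM_minus[of g] by simp

lemma SM_bilinear:
  assumes bb: "bounded_bilinear pr" and "SM f" "SM g"
  shows "SM (\<lambda>x. pr (f x) (g x))"
proof -
  interpret bounded_bilinear pr by fact
  obtain f' g' where f: "BL f" "\<And>x. (f has_derivative blinfun_apply (f' x)) (at x)" "BL f'"
    and g: "BL g" "\<And>x. (g has_derivative blinfun_apply (g' x)) (at x)" "BL g'"
    using assms unfolding SM_def by blast
  define D where "D x = (prod_right (f x) o\<^sub>L g' x) + (prod_left (g x) o\<^sub>L f' x)" for x
  have "((\<lambda>x. pr (f x) (g x)) has_derivative blinfun_apply (D x)) (at x)" for x
    proof -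
    have "blinfun_apply (D x) = (\<lambda>h. pr (f x) (blinfun_apply (g' x) h) + pr (blinfun_apply (f' x) h) (g x))"
      by (rule ext) (simp add: D_def blinfun.add_left bounded_bilinear.prod_left.rep_eq[OF bb]
          bounded_bilinear.prod_right.rep_eq[OF bb])
    then show ?thesis using FDERIV[OF f(2)[of x] g(2)[of x]] by simp
  qed
  moreover have "BL D"
    unfolding D_def
    by (intro BL_add BL_bilinear[OF bounded_bilinear_blinfun_compose] f g
        BL_linear[OF bounded_linear_prod_right] BL_linear[OF bounded_linear_prod_left])
  moreover have "BL (\<lambda>x. pr (f x) (g x))" by (rule BL_bilinear[OF bb f(1) g(1)])
  ultimately show ?thesis unfolding SM_def by blast
qed

lemma SM_linear:
  assumes T: "bounded_linear T" and "SM f" shows "SM (\<lambda>x. T (f x))"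
proof -
  obtain f' where f: "BL f" "\<And>x. (f has_derivative blinfun_apply (f' x)) (at x)" "BL f'"
    using assms unfolding SM_def by blast
  have "((\<lambda>x. T (f x)) has_derivative blinfun_apply (Blinfun T o\<^sub>L f' x)) (at x)" for x
    using bounded_linear.has_derivative[OF T f(2)[of x]]
    by (simp add: bounded_linear_Blinfun_apply[OF T] o_def blinfun_compose.rep_eq)
  moreover have "BL (\<lambda>x. Blinfun T o\<^sub>L f' x)"
    by (intro BL_bilinear[OF bounded_bilinear_blinfun_compose] BL_const f)
  moreover have "BL (\<lambda>x. T (f x))" by (rule BL_linear[OF T f(1)])
  ultimately show ?thesis unfolding SM_def by (intro conjI exI[of _ "\<lambda>x. Blinfun T o\<^sub>L f' x"]) auto
qed




definition rf :: "real \<Rightarrow> 'a::real_inner \<Rightarrow> real" where "rf e x = sqrt (x \<bullet> x + e)"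
definition sf :: "real \<Rightarrow> 'a::real_inner \<Rightarrow> real" where "sf e x = inverse (rf e x)"
definition gf :: "real \<Rightarrow> 'a::real_inner \<Rightarrow> 'a" where "gf e x = sf e x *\<^sub>R x"
definition dgf :: "real \<Rightarrow> 'a::real_inner \<Rightarrow> 'a \<Rightarrow> 'a" where
  "dgf e x h = sf e x *\<^sub>R h - (sf e x * (gf e x \<bullet> h)) *\<^sub>R gf e x"

lemma sqrt_diff_le:
  fixes p q e :: real assumes "e > 0" "p \<ge> 0" "q \<ge> 0"
  shows "\<bar>sqrt (p^2 + e) - sqrt (q^2 + e)\<bar> \<le> \<bar>p - q\<bar>"
proof -
  define a where "a = sqrt (p^2 + e)"
  define b where "b = sqrt (q^2 + e)"
  have a2: "a^2 = p^2 + e" unfolding a_def using assms by (simp add: add_nonneg_pos)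
  have b2: "b^2 = q^2 + e" unfolding b_def using assms by (simp add: add_nonneg_pos)
  have ap: "a \<ge> p" unfolding a_def using assms by (simp add: real_le_rsqrt)
  have bq: "b \<ge> q" unfolding b_def using assms by (simp add: real_le_rsqrt)
  have a0: "a > 0" "b > 0" unfolding a_def b_def using assms by (auto intro: add_nonneg_pos)
  have "\<bar>a - b\<bar> * (a + b) = \<bar>p - q\<bar> * (p + q)"
  proof -
    have "(a - b) * (a + b) = (p - q) * (p + q)" using a2 b2 by (simp add: algebra_simps power2_eq_square)
    then have "\<bar>a - b\<bar> * \<bar>a + b\<bar> = \<bar>p - q\<bar> * \<bar>p + q\<bar>" by (metis abs_mult)
    then show ?thesis using a0 assms by simp
  qed
  also have "\<dots> \<le> \<bar>p - q\<bar> * (a + b)" using ap bq by (intro mult_left_mono) auto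
  finally show ?thesis unfolding a_def[symmetric] b_def[symmetric] using a0 by simp
qed

context fixes e :: real assumes e: "e > 0" begin

lemma rf_pos: "rf e x > 0"
  unfolding rf_def using e by (simp add: add_nonneg_pos)

lemma rf_ge: "rf e x \<ge> sqrt e"
  unfolding rf_def using e by simp

lemma rf_ge_norm: "rf e x \<ge> norm x"
  unfolding rf_def using e by (simp add: real_le_rsqrt power2_norm_eq_inner[symmetric])

lemma rf_lip: "\<bar>rf e x - rf e y\<bar> \<le> norm (x - y)"
proof -
  have "\<bar>rf e x - rf e y\<bar> \<le> \<bar>norm x - norm y\<bar>"
    unfolding rf_def using sqrt_diff_le[OF e, of "norm x" "norm y"]
    by (simp add: power2_norm_eq_inner[symmetric])
  also have "\<dots> \<le> norm (x - y)" by (rule norm_triangle_ineq3)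
  finally show ?thesis .
qed

lemma sf_pos: "sf e x > 0" unfolding sf_def using rf_pos by simp

lemma sf_le: "sf e x \<le> 1 / sqrt e"
  unfolding sf_def using rf_ge[of x] e by (simp add: inverse_eq_divide frac_le)

lemma norm_gf: "norm (gf e x) \<le> 1"
  unfolding gf_def sf_def using rf_ge_norm[of x] rf_pos[of x]
  by (simp add: inverse_eq_divide divide_le_eq_1)

lemma sf_diff: "\<bar>sf e x - sf e y\<bar> = \<bar>rf e x - rf e y\<bar> / (rf e x * rf e y)"
  unfolding sf_def using rf_pos[of x] rf_pos[of y]
  by (simp add: field_simps abs_minus_commute)

lemma sf_lip: "(1/e)-lipschitz_on UNIV (sf e)"
proof (rule lipschitz_onI)
  fix x y :: 'a
  have "sqrt e * sqrt e \<le> rf e x * rf e y"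
    using rf_ge[of x] rf_ge[of y] rf_pos[of x] e by (intro mult_mono) auto
  then have ee: "e \<le> rf e x * rf e y" using e by simp
  have "\<bar>sf e x - sf e y\<bar> \<le> norm (x - y) / (rf e x * rf e y)"
    unfolding sf_diff using rf_lip[of x y] rf_pos[of x] rf_pos[of y]
    by (simp add: divide_right_mono)
  also have "\<dots> \<le> norm (x - y) / e"
    using ee e by (intro divide_left_mono) auto
  finally show "dist (sf e x) (sf e y) \<le> 1 / e * dist x y" by (simp add: dist_norm dist_real_def)
qed (use e in simp)

lemma gf_lip: "(2 / sqrt e)-lipschitz_on UNIV (gf e)"
proof (rule lipschitz_onI)
  fix x y :: 'a
  have eq: "gf e x - gf e y = sf e x *\<^sub>R (x - y) + (sf e x - sf e y) *\<^sub>R y"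
    unfolding gf_def by (simp add: algebra_simps)
  have t1: "norm (sf e x *\<^sub>R (x - y)) \<le> norm (x - y) / sqrt e"
    using sf_le[of x] sf_pos[of x] by (simp add: mult_right_mono divide_inverse mult.commute)
  have "norm ((sf e x - sf e y) *\<^sub>R y) = \<bar>rf e x - rf e y\<bar> / rf e x * (norm y / rf e y)"
    using sf_diff[of x y] by simp
  also have "\<dots> \<le> (norm (x - y) / sqrt e) * 1"
  proof (intro mult_mono)
    show "\<bar>rf e x - rf e y\<bar> / rf e x \<le> norm (x - y) / sqrt e"
      using rf_lip[of x y] rf_ge[of x] rf_pos[of x] e by (intro frac_le) auto
    show "norm y / rf e y \<le> 1" using rf_ge_norm[of y] rf_pos[of y] by simp
  qed (use rf_pos[of y] rf_pos[of x] e in auto)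
  finally have t2: "norm ((sf e x - sf e y) *\<^sub>R y) \<le> norm (x - y) / sqrt e" by simp
  have "norm (gf e x - gf e y) \<le> norm (x - y) / sqrt e + norm (x - y) / sqrt e"
    unfolding eq using t1 t2 norm_triangle_le by (meson add_mono)
  then show "dist (gf e x) (gf e y) \<le> 2 / sqrt e * dist x y" by (simp add: dist_norm field_simps)
qed (use e in simp)

lemma BL_sf: "BL (sf e :: 'a::real_inner \<Rightarrow> real)"
  unfolding BL_def using sf_le sf_pos sf_lip by (metis abs_of_pos real_norm_def)

lemma BL_gf: "BL (gf e :: 'a::real_inner \<Rightarrow> 'a)"
  unfolding BL_def using norm_gf gf_lip by blast

lemma sf_deriv: "(sf e has_derivative (\<lambda>h. - (sf e x ^ 2 * (gf e x \<bullet> h)))) (at x)"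
proof -
  have p: "x \<bullet> x + e > 0" using e by (simp add: add_nonneg_pos)
  have d1: "((\<lambda>x. x \<bullet> x + e) has_derivative (\<lambda>h. x \<bullet> h + h \<bullet> x)) (at x)"
    by (rule derivative_eq_intros refl)+ simp
  note d2 = has_derivative_real_sqrt[of "\<lambda>x. x \<bullet> x + e", OF p d1]
  have r0: "sqrt (x \<bullet> x + e) \<noteq> 0" using p by simp
  note d3 = Deriv.has_derivative_inverse[OF r0 d2]
  show ?thesis
    unfolding sf_def[abs_def] rf_def
  proof (rule has_derivative_eq_rhs[OF d3], rule ext)
    fix h
    have s2: "sqrt (x \<bullet> x + e) ^ 2 = x \<bullet> x + e" using p by simp
    show "- (inverse (sqrt (x \<bullet> x + e)) * ((x \<bullet> h + h \<bullet> x) * (inverse (sqrt (x \<bullet> x + e)) / 2)) *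
          inverse (sqrt (x \<bullet> x + e))) =
         - (inverse (sqrt (x \<bullet> x + e)) ^ 2 * (gf e x \<bullet> h))"
      unfolding gf_def sf_def rf_def using r0
      by (simp add: inner_commute power2_eq_square field_simps)
  qed
qed

lemma gf_deriv: "(gf e has_derivative dgf e x) (at x)"
proof -
  have "((\<lambda>x. sf e x *\<^sub>R x) has_derivative (\<lambda>h. sf e x *\<^sub>R h + (- (sf e x ^ 2 * (gf e x \<bullet> h))) *\<^sub>R x)) (at x)"
    by (rule derivative_eq_intros sf_deriv refl)+
  then show ?thesis unfolding gf_def[abs_def]
    by (rule has_derivative_eq_rhs) (auto simp: dgf_def gf_def power2_eq_square fun_eq_iff algebra_simps)
qed

lemma dgf_sym: "dgf e x h \<bullet> v = h \<bullet> dgf e x v"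
  unfolding dgf_def by (simp add: inner_diff_left inner_diff_right inner_commute algebra_simps)

lemma dgf_linear: "bounded_linear (dgf e x)"
  using gf_deriv has_derivative_bounded_linear by blast

lemma SM_sfP:
  fixes P :: "'a::real_normed_vector \<Rightarrow> 'b::real_inner"
  assumes P: "bounded_linear P" shows "SM (\<lambda>\<theta>. sf e (P \<theta>))"
proof -
  define D where "D \<theta> = (- (sf e (P \<theta>) * sf e (P \<theta>))) *\<^sub>R (blinfun_inner_left (gf e (P \<theta>)) o\<^sub>L Blinfun P)" for \<theta>
  have "((\<lambda>\<theta>. sf e (P \<theta>)) has_derivative blinfun_apply (D \<theta>)) (at \<theta>)" for \<theta>
  proof -
    have "((\<lambda>\<theta>. sf e (P \<theta>)) has_derivative (\<lambda>h. - (sf e (P \<theta>) ^ 2 * (gf e (P \<theta>) \<bullet> P h)))) (at \<theta>)"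
      using has_derivative_compose[OF bounded_linear_imp_has_derivative[OF P] sf_deriv] by simp
    then show ?thesis
      by (rule has_derivative_eq_rhs)
        (auto simp: D_def fun_eq_iff bounded_linear_Blinfun_apply[OF P] blinfun.scaleR_left blinfun.minus_left power2_eq_square inner_commute)
  qed
  moreover have "BL D" unfolding D_def
    by (intro BL_bilinear[OF bounded_bilinear_scaleR] BL_minus BL_bilinear[OF bounded_bilinear_mult]
        BL_bilinear[OF bounded_bilinear_blinfun_compose] BL_linear[OF bounded_linear_blinfun_inner_left]
        BL_comp_linear[OF P] BL_sf BL_gf BL_const)
  moreover have "BL (\<lambda>\<theta>. sf e (P \<theta>))" by (intro BL_comp_linear[OF P] BL_sf)
  ultimately show ?thesis unfolding SM_def by blast
qed

lemma SM_gfP: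
  fixes P :: "'a::real_normed_vector \<Rightarrow> 'b::real_inner"
  assumes P: "bounded_linear P" shows "SM (\<lambda>\<theta>. gf e (P \<theta>))"
proof -
  define D where "D \<theta> = sf e (P \<theta>) *\<^sub>R Blinfun P - sf e (P \<theta>) *\<^sub>R ((blinfun_scaleR_left (gf e (P \<theta>)) o\<^sub>L blinfun_inner_left (gf e (P \<theta>))) o\<^sub>L Blinfun P)" for \<theta>
  have "((\<lambda>\<theta>. gf e (P \<theta>)) has_derivative blinfun_apply (D \<theta>)) (at \<theta>)" for \<theta>
  proof -
    have "((\<lambda>\<theta>. gf e (P \<theta>)) has_derivative (\<lambda>h. dgf e (P \<theta>) (P h))) (at \<theta>)"
      using has_derivative_compose[OF bounded_linear_imp_has_derivative[OF P] gf_deriv] by simp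
    then show ?thesis
      by (rule has_derivative_eq_rhs)
        (auto simp: D_def fun_eq_iff bounded_linear_Blinfun_apply[OF P] blinfun.scaleR_left blinfun.minus_left dgf_def inner_commute blinfun.diff_left)
  qed
  moreover have "BL D" unfolding D_def
    by (intro BL_diff BL_bilinear[OF bounded_bilinear_scaleR]
        BL_bilinear[OF bounded_bilinear_blinfun_compose] BL_linear[OF bounded_linear_blinfun_inner_left]
        BL_linear[OF bounded_linear_blinfun_scaleR_left]
        BL_comp_linear[OF P] BL_sf BL_gf BL_const)
  moreover have "BL (\<lambda>\<theta>. gf e (P \<theta>))" by (intro BL_comp_linear[OF P] BL_gf)
  ultimately show ?thesis unfolding SM_def by blast
qed

end



definition FM :: "real \<Rightarrow> ('n::euclidean_space \<Rightarrow> 'm::euclidean_space) \<Rightarrow> ('n \<Rightarrow> 'm) \<Rightarrow> ('m \<Rightarrow> 'm) \<Rightarrow> 'n \<Rightarrow> real" where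
  "FM e Pa Pb M \<theta> = gf e (Pa \<theta>) \<bullet> M (gf e (Pb \<theta>))"

definition GM :: "real \<Rightarrow> ('n::euclidean_space \<Rightarrow> 'm::euclidean_space) \<Rightarrow> ('n \<Rightarrow> 'm) \<Rightarrow> ('m \<Rightarrow> 'm) \<Rightarrow> 'n \<Rightarrow> 'n" where
  "GM e Pa Pb M \<theta> = adjoint Pa (dgf e (Pa \<theta>) (M (gf e (Pb \<theta>))))
                   + adjoint Pb (dgf e (Pb \<theta>) (adjoint M (gf e (Pa \<theta>))))"

context fixes e :: real assumes e: "e > 0" begin

lemma FM_grad:
  fixes Pa Pb :: "'n::euclidean_space \<Rightarrow> 'm::euclidean_space" and M :: "'m \<Rightarrow> 'm"
  assumes Pa: "linear Pa" and Pb: "linear Pb" and M: "linear M"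
  shows "GDERIV (FM e Pa Pb M) \<theta> :> GM e Pa Pb M \<theta>"
proof -
  have Pa': "bounded_linear Pa" and Pb': "bounded_linear Pb" and M': "bounded_linear M"
    using Pa Pb M linear_conv_bounded_linear by auto
  have da: "((\<lambda>\<theta>. gf e (Pa \<theta>)) has_derivative (\<lambda>h. dgf e (Pa \<theta>) (Pa h))) (at \<theta>)"
    using has_derivative_compose[OF bounded_linear_imp_has_derivative[OF Pa'] gf_deriv[OF e]] by simp
  have db: "((\<lambda>\<theta>. M (gf e (Pb \<theta>))) has_derivative (\<lambda>h. M (dgf e (Pb \<theta>) (Pb h)))) (at \<theta>)"
    using bounded_linear.has_derivative[OF M' has_derivative_compose[OF bounded_linear_imp_has_derivative[OF Pb'] gf_deriv[OF e]]] by simp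
  note d = has_derivative_inner[OF da db]
  show ?thesis unfolding gderiv_def FM_def[abs_def]
  proof (rule has_derivative_eq_rhs[OF d], rule ext)
    fix h
    have 1: "dgf e (Pa \<theta>) (Pa h) \<bullet> M (gf e (Pb \<theta>)) = h \<bullet> adjoint Pa (dgf e (Pa \<theta>) (M (gf e (Pb \<theta>))))"
      by (simp add: dgf_sym[OF e] adjoint_clauses[OF Pa])
    have 2: "gf e (Pa \<theta>) \<bullet> M (dgf e (Pb \<theta>) (Pb h)) = h \<bullet> adjoint Pb (dgf e (Pb \<theta>) (adjoint M (gf e (Pa \<theta>))))"
    proof -
      have "gf e (Pa \<theta>) \<bullet> M (dgf e (Pb \<theta>) (Pb h)) = adjoint M (gf e (Pa \<theta>)) \<bullet> dgf e (Pb \<theta>) (Pb h)"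
        by (simp add: adjoint_clauses[OF M])
      also have "\<dots> = dgf e (Pb \<theta>) (Pb h) \<bullet> adjoint M (gf e (Pa \<theta>))" by (rule inner_commute)
      also have "\<dots> = Pb h \<bullet> dgf e (Pb \<theta>) (adjoint M (gf e (Pa \<theta>)))" by (rule dgf_sym[OF e])
      also have "\<dots> = h \<bullet> adjoint Pb (dgf e (Pb \<theta>) (adjoint M (gf e (Pa \<theta>))))"
        by (simp add: adjoint_clauses[OF Pb])
      finally show ?thesis .
    qed
    show "gf e (Pa \<theta>) \<bullet> M (dgf e (Pb \<theta>) (Pb h)) + dgf e (Pa \<theta>) (Pa h) \<bullet> M (gf e (Pb \<theta>)) = h \<bullet> GM e Pa Pb M \<theta>"
      unfolding GM_def inner_add_right 1 2 by simp
  qed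
qed

lemma SM_dgfP:
  fixes P :: "'a::real_normed_vector \<Rightarrow> 'b::real_inner"
  assumes P: "bounded_linear P" and V: "SM V"
  shows "SM (\<lambda>\<theta>. dgf e (P \<theta>) (V \<theta>))"
  unfolding dgf_def
  by (intro SM_diff SM_bilinear[OF bounded_bilinear_scaleR] SM_bilinear[OF bounded_bilinear_mult]
      SM_bilinear[OF bounded_bilinear_inner] SM_sfP[OF e P] SM_gfP[OF e P] V)

lemma SM_GM:
  fixes Pa Pb :: "'n::euclidean_space \<Rightarrow> 'm::euclidean_space" and M :: "'m \<Rightarrow> 'm"
  assumes Pa: "linear Pa" and Pb: "linear Pb" and M: "linear M"
  shows "SM (GM e Pa Pb M)"
proof -
  have Pa': "bounded_linear Pa" and Pb': "bounded_linear Pb" and M': "bounded_linear M"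
    and Pa'': "bounded_linear (adjoint Pa)" and Pb'': "bounded_linear (adjoint Pb)"
    and M'': "bounded_linear (adjoint M)"
    using Pa Pb M linear_conv_bounded_linear adjoint_linear by auto
  show ?thesis unfolding GM_def[abs_def]
    by (intro SM_add SM_linear[OF Pa''] SM_linear[OF Pb''] SM_dgfP[OF Pa'] SM_dgfP[OF Pb']
        SM_linear[OF M'] SM_linear[OF M''] SM_gfP[OF e Pa'] SM_gfP[OF e Pb'])
qed

end



lemma lipgrad_convex:
  fixes f :: "'a::euclidean_space \<Rightarrow> real"
  assumes gr: "\<And>x. GDERIV f x :> g x" and lip: "L-lipschitz_on UNIV g"
  shows "convex_on UNIV (\<lambda>x. f x + L / 2 * (norm x)^2)"
proof (rule convex_onI)
  fix t :: real and x y :: 'a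
  assume t: "0 < t" "t < 1"
  define w where "w = y - x"
  define \<phi> where "\<phi> z = f z + L / 2 * (norm z)^2" for z
  define h where "h s = \<phi> (x + s *\<^sub>R w)" for s
  define h' where "h' s = (g (x + s *\<^sub>R w) + L *\<^sub>R (x + s *\<^sub>R w)) \<bullet> w" for s
  have L0: "L \<ge> 0" using lip lipschitz_on_nonneg by blast
  have hd: "(h has_real_derivative h' s) (at s)" for s
  proof -
    define z where "z = x + s *\<^sub>R w"
    have dz: "((\<lambda>s. x + s *\<^sub>R w) has_derivative (\<lambda>r. r *\<^sub>R w)) (at s)"
      by (rule derivative_eq_intros refl)+ simp
    have df: "(f has_derivative (\<lambda>k. k \<bullet> g z)) (at z)" using gr[of z] by (simp add: gderiv_def)
    have dn: "((\<lambda>z. L / 2 * (z \<bullet> z)) has_derivative (\<lambda>k. L / 2 * (z \<bullet> k + k \<bullet> z))) (at z)"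
      by (rule derivative_eq_intros refl)+
    have dphi: "(\<phi> has_derivative (\<lambda>k. k \<bullet> g z + L / 2 * (z \<bullet> k + k \<bullet> z))) (at z)"
      unfolding \<phi>_def power2_norm_eq_inner using has_derivative_add[OF df dn] by simp
    have "(h has_derivative (\<lambda>r. (r *\<^sub>R w) \<bullet> g z + L / 2 * (z \<bullet> (r *\<^sub>R w) + (r *\<^sub>R w) \<bullet> z))) (at s)"
      unfolding h_def[abs_def] using has_derivative_compose[OF dz dphi[unfolded z_def]]
      by (simp add: z_def)
    then show ?thesis unfolding has_field_derivative_def
      by (rule has_derivative_eq_rhs)
        (auto simp: fun_eq_iff h'_def z_def inner_commute algebra_simps)
  qed
  have mono: "h' s1 \<le> h' s2" if "s1 \<le> s2" for s1 s2
  proof -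
    define z1 where "z1 = x + s1 *\<^sub>R w"
    define z2 where "z2 = x + s2 *\<^sub>R w"
    have dz: "z2 - z1 = (s2 - s1) *\<^sub>R w" by (simp add: z1_def z2_def algebra_simps)
    have "norm (g z2 - g z1) \<le> L * norm (z2 - z1)" using lipschitz_on_normD[OF lip] by simp
    also have "\<dots> = L * (s2 - s1) * norm w" using dz that by (simp add: mult.assoc)
    finally have gl: "norm (g z2 - g z1) \<le> L * (s2 - s1) * norm w" .
    have "- ((g z2 - g z1) \<bullet> w) \<le> norm (g z2 - g z1) * norm w"
      using Cauchy_Schwarz_ineq2[of "g z2 - g z1" w] by (simp add: abs_le_iff)
    also have "\<dots> \<le> L * (s2 - s1) * norm w * norm w" using gl by (simp add: mult_right_mono)
    finally have c: "- ((g z2 - g z1) \<bullet> w) \<le> L * (s2 - s1) * (w \<bullet> w)"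
      by (simp add: power2_norm_eq_inner[symmetric] power2_eq_square mult.assoc)
    have "h' s2 - h' s1 = (g z2 - g z1) \<bullet> w + L * (s2 - s1) * (w \<bullet> w)"
      unfolding h'_def z1_def[symmetric] z2_def[symmetric]
      by (simp add: inner_diff_left inner_add_left dz[symmetric] algebra_simps z1_def z2_def)
    then show ?thesis using c by linarith
  qed
  have "convex_on UNIV h"
    by (rule convex_on_realI[where f'=h']) (use hd mono in auto)
  from convex_onD[OF this, of t 0 1] t
  have "h ((1 - t) *\<^sub>R 0 + t *\<^sub>R 1) \<le> (1 - t) * h 0 + t * h 1" by simp
  moreover have "x + t *\<^sub>R w = (1 - t) *\<^sub>R x + t *\<^sub>R y" by (simp add: w_def algebra_simps)
  ultimately have "\<phi> ((1 - t) *\<^sub>R x + t *\<^sub>R y) \<le> (1 - t) * \<phi> x + t * \<phi> y"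
    by (simp add: h_def w_def)
  then show "f ((1 - t) *\<^sub>R x + t *\<^sub>R y) + L / 2 * (norm ((1 - t) *\<^sub>R x + t *\<^sub>R y))^2
      \<le> (1 - t) * (f x + L / 2 * (norm x)^2) + t * (f y + L / 2 * (norm y)^2)"
    by (simp add: \<phi>_def)
qed simp




definition C0 :: "real^3^3" where "C0 = vector [vector [1,0,0], vector [0,0,0], vector [0,0,0]]"
definition C1 :: "real^3^3" where "C1 = vector [vector [0,0,0], vector [0,1,0], vector [0,0,1]]"
definition C2 :: "real^3^3" where "C2 = vector [vector [0,0,0], vector [0,0,1], vector [0,-1,0]]"

lemma linear_MC: "linear (\<lambda>Y::real^3^3. Y ** C)"
  by (rule linearI)
    (auto simp: vec_eq_iff matrix_matrix_mult_def sum.distrib algebra_simps scaleR_sum_right sum_distrib_left)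

lemma scaleR_mm: "((k::real) *\<^sub>R (A::real^'m^'n)) ** B = k *\<^sub>R (A ** B)"
  by (simp add: vec_eq_iff matrix_matrix_mult_def sum_distrib_left algebra_simps)

lemma trace_id:
  "trace (transpose A ** B ** transpose (Rx u)) =
     A \<bullet> (B ** C0) + cos u * (A \<bullet> (B ** C1)) + sin u * (A \<bullet> (B ** C2))"
  by (simp add: trace_def matrix_matrix_mult_def transpose_def inner_vec_def sum_3 Rx_def C0_def C1_def C2_def
      algebra_simps sum.distrib sum_subtractf sum_distrib_left sum_negf)

lemma frob_eq: "frob_norm A = sqrt (A \<bullet> A)"
  by (simp add: frob_norm_def inner_vec_def power2_eq_square)

lemma FM_MC: fixes Pa Pb :: "'n::euclidean_space \<Rightarrow> real^3^3"
  shows "FM e Pa Pb (\<lambda>Y. Y ** C) \<theta> = (sf e (Pa \<theta>) * sf e (Pb \<theta>)) * (Pa \<theta> \<bullet> (Pb \<theta> ** C))"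
  unfolding FM_def gf_def scaleR_mm inner_scaleR_left inner_scaleR_right by simp

lemma bfun_eq: fixes Pa Pb :: "real^'n \<Rightarrow> real^3^3"
  shows "bfun Pa Pb e \<theta> u = - (FM e Pa Pb (\<lambda>Y. Y ** C0) \<theta> + cos u * FM e Pa Pb (\<lambda>Y. Y ** C1) \<theta>
                          + sin u * FM e Pa Pb (\<lambda>Y. Y ** C2) \<theta>)"
  unfolding bfun_def FM_MC trace_id frob_eq
  by (simp add: sf_def rf_def divide_inverse algebra_simps)

lemma BL_boundE: assumes "BL f" obtains B L where "\<And>x. norm (f x) \<le> B" "L-lipschitz_on UNIV f"
  using assms unfolding BL_def by blast

theorem corollary11:
  fixes X :: "real set" and eps :: real
    and Pa Pb :: "real^'n \<Rightarrow> real^3^3"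
  assumes "X \<noteq> {}" and "compact X" and "convex X"
    and "eps > 0"
    and "linear Pa" and "linear Pb"
  shows "(\<forall>u\<in>X. twice_diff_loc_lip_hessian (\<lambda>\<theta>. bfun Pa Pb eps \<theta> u))
       \<and> (\<exists>L. \<forall>u\<in>X. curvature_bounded L (\<lambda>\<theta>. bfun Pa Pb eps \<theta> u))
       \<and> (\<exists>Du. (\<forall>\<theta> u. ((\<lambda>u'. bfun Pa Pb eps \<theta> u') has_real_derivative Du \<theta> u) (at u))
              \<and> (\<exists>M. \<forall>\<theta>. \<forall>u\<in>X. \<exists>v. GDERIV (\<lambda>\<theta>'. Du \<theta>' u) \<theta> :> v \<and> norm v \<le> M))"
proof -
  have e: "eps > 0" and Pa: "linear Pa" and Pb: "linear Pb" using assms by auto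
  define F where "F C \<theta> = FM eps Pa Pb (\<lambda>Y. Y ** C) \<theta>" for C \<theta>
  define G where "G C = GM eps Pa Pb (\<lambda>Y. Y ** C)" for C
  have grad: "(F C has_derivative (\<lambda>h. h \<bullet> G C \<theta>)) (at \<theta>)" for C \<theta>
    using FM_grad[OF e Pa Pb linear_MC, of C \<theta>] unfolding gderiv_def F_def[abs_def] G_def by simp
  have sm: "SM (G C)" for C unfolding G_def by (rule SM_GM[OF e Pa Pb linear_MC])
  have bf: "bfun Pa Pb eps \<theta> u = - (F C0 \<theta> + cos u * F C1 \<theta> + sin u * F C2 \<theta>)" for \<theta> u
    unfolding F_def by (rule bfun_eq)
  define gu where "gu u \<theta> = - (G C0 \<theta> + cos u *\<^sub>R G C1 \<theta> + sin u *\<^sub>R G C2 \<theta>)" for u \<theta>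
  have gradu: "GDERIV (\<lambda>\<theta>. bfun Pa Pb eps \<theta> u) \<theta> :> gu u \<theta>" for u \<theta>
  proof -
    have "((\<lambda>\<theta>. - (F C0 \<theta> + cos u * F C1 \<theta> + sin u * F C2 \<theta>)) has_derivative
        (\<lambda>h. - (h \<bullet> G C0 \<theta> + cos u * (h \<bullet> G C1 \<theta>) + sin u * (h \<bullet> G C2 \<theta>)))) (at \<theta>)"
      by (intro has_derivative_minus has_derivative_add has_derivative_mult_right grad)
    then show ?thesis unfolding gderiv_def bf
      by (rule has_derivative_eq_rhs) (auto simp: fun_eq_iff gu_def inner_add_right inner_minus_right inner_diff_right)
  qed
  have smu: "SM (gu u)" for u
    unfolding gu_def
    by (intro SM_minus SM_add SM_bilinear[OF bounded_bilinear_scaleR] SM_const sm)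
  obtain B1 L1 where B1: "\<And>x. norm (G C1 x) \<le> B1" and L1: "L1-lipschitz_on UNIV (G C1)"
    using sm[of C1] unfolding SM_def BL_def by blast
  obtain B2 L2 where B2: "\<And>x. norm (G C2 x) \<le> B2" and L2: "L2-lipschitz_on UNIV (G C2)"
    using sm[of C2] unfolding SM_def BL_def by blast
  obtain B0 L0 where B0: "\<And>x. norm (G C0 x) \<le> B0" and L0: "L0-lipschitz_on UNIV (G C0)"
    using sm[of C0] unfolding SM_def BL_def by blast
  have part1: "twice_diff_loc_lip_hessian (\<lambda>\<theta>. bfun Pa Pb eps \<theta> u)" for u
  proof -
    obtain H where H: "\<And>x. (gu u has_derivative blinfun_apply (H x)) (at x)" "BL H"
      using smu[of u] unfolding SM_def by blast
    obtain K where K: "K-lipschitz_on UNIV H" using H(2) unfolding BL_def by blast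
    show ?thesis unfolding twice_diff_loc_lip_hessian_def
      apply (rule exI[of _ "gu u"], rule exI[of _ H])
      apply (intro conjI allI)
      subgoal using gradu by blast
      subgoal using H(1) by blast
      subgoal for x
        apply (rule exI[of _ 1])
        using lipschitz_on_subset[OF K, of "ball x 1"] by auto
      done
  qed
  have lipu: "(L0 + L1 + L2)-lipschitz_on UNIV (gu u)" for u
  proof -
    have a: "(\<bar>cos u\<bar> * L1)-lipschitz_on UNIV (\<lambda>\<theta>. cos u *\<^sub>R G C1 \<theta>)" by (rule lipschitz_on_cmult[OF L1])
    have b: "(\<bar>sin u\<bar> * L2)-lipschitz_on UNIV (\<lambda>\<theta>. sin u *\<^sub>R G C2 \<theta>)" by (rule lipschitz_on_cmult[OF L2])
    have "(L0 + \<bar>cos u\<bar> * L1 + \<bar>sin u\<bar> * L2)-lipschitz_on UNIV (gu u)"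
      unfolding gu_def by (intro lipschitz_on_minus lipschitz_on_add L0 a b)
    moreover have "\<bar>cos u\<bar> * L1 \<le> L1" "\<bar>sin u\<bar> * L2 \<le> L2"
      using lipschitz_on_nonneg[OF L1] lipschitz_on_nonneg[OF L2]
      by (auto intro!: mult_left_le_one_le)
    ultimately show ?thesis using lipschitz_on_mono by (metis add_mono order_refl subset_UNIV)
  qed
  have part2: "curvature_bounded (L0 + L1 + L2) (\<lambda>\<theta>. bfun Pa Pb eps \<theta> u)" for u
    unfolding curvature_bounded_def
    using lipgrad_convex[OF gradu lipu] gradu lipu by blast
  define Du where "Du \<theta> u = sin u * F C1 \<theta> - cos u * F C2 \<theta>" for \<theta> u
  have dU: "((\<lambda>u'. bfun Pa Pb eps \<theta> u') has_real_derivative Du \<theta> u) (at u)" for \<theta> u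
  proof -
    have "((\<lambda>u. - (F C0 \<theta> + cos u * F C1 \<theta> + sin u * F C2 \<theta>)) has_real_derivative
          - (0 + - sin u * F C1 \<theta> + cos u * F C2 \<theta>)) (at u)"
      by (intro derivative_intros) (auto intro!: derivative_eq_intros)
    then show ?thesis unfolding bf Du_def by (simp add: algebra_simps)
  qed
  have dG: "GDERIV (\<lambda>\<theta>'. Du \<theta>' u) \<theta> :> (sin u *\<^sub>R G C1 \<theta> - cos u *\<^sub>R G C2 \<theta>) \<and>
            norm (sin u *\<^sub>R G C1 \<theta> - cos u *\<^sub>R G C2 \<theta>) \<le> B1 + B2" for u \<theta>
  proof
    have "((\<lambda>\<theta>. sin u * F C1 \<theta> - cos u * F C2 \<theta>) has_derivative
        (\<lambda>h. sin u * (h \<bullet> G C1 \<theta>) - cos u * (h \<bullet> G C2 \<theta>))) (at \<theta>)"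
      by (intro has_derivative_diff has_derivative_mult_right grad)
    then show "GDERIV (\<lambda>\<theta>'. Du \<theta>' u) \<theta> :> (sin u *\<^sub>R G C1 \<theta> - cos u *\<^sub>R G C2 \<theta>)"
      unfolding gderiv_def Du_def
      by (rule has_derivative_eq_rhs) (auto simp: fun_eq_iff inner_diff_right)
    have "norm (sin u *\<^sub>R G C1 \<theta> - cos u *\<^sub>R G C2 \<theta>) \<le> \<bar>sin u\<bar> * norm (G C1 \<theta>) + \<bar>cos u\<bar> * norm (G C2 \<theta>)"
      using norm_triangle_ineq4[of "sin u *\<^sub>R G C1 \<theta>" "cos u *\<^sub>R G C2 \<theta>"] by simp
    also have "\<dots> \<le> 1 * B1 + 1 * B2"
      using B1[of \<theta>] B2[of \<theta>] abs_sin_le_one[of u] abs_cos_le_one[of u]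
      by (intro add_mono mult_mono) auto
    finally show "norm (sin u *\<^sub>R G C1 \<theta> - cos u *\<^sub>R G C2 \<theta>) \<le> B1 + B2" by simp
  qed
  show ?thesis
    using part1 part2 dU dG by blast
qed


end
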